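(* Let $\mathcal{C}$ be a category and $\mathcal{W}$ a class of morphisms of $\mathcal{C}$ satisfying (L0) and (L1). Let $\mathcal{W}_L$ be the class of morphisms generated under composition by $\mathcal{W}$ and all split monomorphisms of $\mathcal{C}$. Then the following two conditions are equivalent: (L2): for every $w\in\mathcal{W}$ and parallel morphisms $f_1,f_2$ with $\mathrm{dom}(f_i)=\mathrm{cod}(w)$ and $f_1w=f_2w$, there exists $w'\in\mathcal{W}$ with $\mathrm{dom}(w')=\mathrm{cod}(f_1)$ and $w'f_1=w'f_2$; (L2'): for every $w\in\mathcal{W}$ and parallel morphisms $f_1,f_2$ with $\mathrm{dom}(f_i)=\mathrm{cod}(w)$ and $f_1w=f_2w$, there exists $w'\in\mathcal{W}_L$ with $\mathrm{dom}(w')=\mathrm{cod}(f_1)$ and $w'f_1=w'f_2$. Here (L0): $\mathcal{W}$ contains all identity morphisms and is closed under composition; (L1): for every $w\in\mathcal{W}$ and every morphism $f$ with $\mathrm{dom}(f)=\mathrm{dom}(w)$ there exist $w'\in\mathcal{W}$ with $\mathrm{dom}(w')=\mathrm{cod}(f)$ and a morphism $f'$ with $\mathrm{dom}(f')=\mathrm{cod}(w)$, $\mathrm{cod}(f')=\mathrm{cod}(w')$, such that $w'f=f'w$.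
   Context: A split monomorphism is a morphism $m$ having a left inverse $e$, i.e. $em=\mathrm{id}$. *)

theory Defs
  imports Main
begin

text \<open>A (possibly large) category given by its objects, arrows, domain, codomain,
  identities and composition. comp g f denotes the composite g after f
  (defined when cod f = dom g).\<close>

record ('o, 'm) category =
  Obj  :: "'o set"
  Arr  :: "'m set"
  dom  :: "'m \<Rightarrow> 'o"
  cod  :: "'m \<Rightarrow> 'o"
  idm  :: "'o \<Rightarrow> 'm"
  comp :: "'m \<Rightarrow> 'm \<Rightarrow> 'm"

definition is_category :: "('o, 'm) category \<Rightarrow> bool" where
  "is_category C \<longleftrightarrow>
     (\<forall>f\<in>Arr C. dom C f \<in> Obj C \<and> cod C f \<in> Obj C) \<and>
     (\<forall>a\<in>Obj C. idm C a \<in> Arr C \<and> dom C (idm C a) = a \<and> cod C (idm C a) = a) \<and>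
     (\<forall>f\<in>Arr C. \<forall>g\<in>Arr C. cod C f = dom C g \<longrightarrow>
        comp C g f \<in> Arr C \<and> dom C (comp C g f) = dom C f \<and> cod C (comp C g f) = cod C g) \<and>
     (\<forall>f\<in>Arr C. comp C (idm C (cod C f)) f = f \<and> comp C f (idm C (dom C f)) = f) \<and>
     (\<forall>f\<in>Arr C. \<forall>g\<in>Arr C. \<forall>h\<in>Arr C. cod C f = dom C g \<longrightarrow> cod C g = dom C h \<longrightarrow>
        comp C h (comp C g f) = comp C (comp C h g) f)"

definition split_mono :: "('o, 'm) category \<Rightarrow> 'm \<Rightarrow> bool" where
  "split_mono C m \<longleftrightarrow> m \<in> Arr C \<and>
     (\<exists>e\<in>Arr C. dom C e = cod C m \<and> cod C e = dom C m \<and> comp C e m = idm C (dom C m))"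

inductive_set comp_closure :: "('o, 'm) category \<Rightarrow> 'm set \<Rightarrow> 'm set"
  for C :: "('o, 'm) category" and S :: "'m set" where
  base: "s \<in> S \<Longrightarrow> s \<in> comp_closure C S"
| compose: "f \<in> comp_closure C S \<Longrightarrow> g \<in> comp_closure C S \<Longrightarrow> cod C f = dom C g
            \<Longrightarrow> comp C g f \<in> comp_closure C S"

definition W_L :: "('o, 'm) category \<Rightarrow> 'm set \<Rightarrow> 'm set" where
  "W_L C W = comp_closure C (W \<union> {m. split_mono C m})"

definition L0 :: "('o, 'm) category \<Rightarrow> 'm set \<Rightarrow> bool" where
  "L0 C W \<longleftrightarrow> (\<forall>a\<in>Obj C. idm C a \<in> W) \<and>
     (\<forall>v\<in>W. \<forall>w\<in>W. cod C v = dom C w \<longrightarrow> comp C w v \<in> W)"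

definition L1 :: "('o, 'm) category \<Rightarrow> 'm set \<Rightarrow> bool" where
  "L1 C W \<longleftrightarrow> (\<forall>w\<in>W. \<forall>f\<in>Arr C. dom C f = dom C w \<longrightarrow>
     (\<exists>w'\<in>W. \<exists>f'\<in>Arr C. dom C w' = cod C f \<and> dom C f' = cod C w \<and> cod C f' = cod C w' \<and>
        comp C w' f = comp C f' w))"

text \<open>Cancellation condition: equalisation by a W-morphism on the right implies
  equalisation by a V-morphism on the left. L2 is L2_wrt C W W, L2' is L2_wrt C W (W_L C W).\<close>
definition L2_wrt :: "('o, 'm) category \<Rightarrow> 'm set \<Rightarrow> 'm set \<Rightarrow> bool" where
  "L2_wrt C W V \<longleftrightarrow> (\<forall>w\<in>W. \<forall>f1\<in>Arr C. \<forall>f2\<in>Arr C.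
     dom C f1 = cod C w \<and> dom C f2 = cod C w \<and> cod C f1 = cod C f2 \<and>
     comp C f1 w = comp C f2 w \<longrightarrow>
     (\<exists>w'\<in>V. dom C w' = cod C f1 \<and> comp C w' f1 = comp C w' f2))"

end

theory Submission
  imports Defs
begin

lemma cat_facts:
  assumes "is_category C"
  shows cat_dc: "f \<in> Arr C \<Longrightarrow> dom C f \<in> Obj C \<and> cod C f \<in> Obj C"
    and cat_id: "a \<in> Obj C \<Longrightarrow> idm C a \<in> Arr C \<and> dom C (idm C a) = a \<and> cod C (idm C a) = a"
    and cat_comp: "f \<in> Arr C \<Longrightarrow> g \<in> Arr C \<Longrightarrow> cod C f = dom C g \<Longrightarrow>
        comp C g f \<in> Arr C \<and> dom C (comp C g f) = dom C f \<and> cod C (comp C g f) = cod C g"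
    and cat_unit: "f \<in> Arr C \<Longrightarrow> comp C (idm C (cod C f)) f = f \<and> comp C f (idm C (dom C f)) = f"
    and cat_assoc: "f \<in> Arr C \<Longrightarrow> g \<in> Arr C \<Longrightarrow> h \<in> Arr C \<Longrightarrow> cod C f = dom C g \<Longrightarrow> cod C g = dom C h \<Longrightarrow>
        comp C h (comp C g f) = comp C (comp C h g) f"
  using assms unfolding is_category_def by blast+

definition Qp where
  "Qp C W v \<longleftrightarrow> (\<forall>f1\<in>Arr C. \<forall>f2\<in>Arr C. dom C f1 = dom C f2 \<and> cod C f1 = dom C v \<and> cod C f2 = dom C v
      \<and> comp C v f1 = comp C v f2 \<longrightarrow> (\<exists>u\<in>W. dom C u = cod C f1 \<and> comp C u f1 = comp C u f2))"

lemma key: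
  assumes C: "is_category C" and WA: "W \<subseteq> Arr C" and L0: "L0 C W" and L1: "L1 C W"
    and v: "v \<in> comp_closure C (W \<union> {m. split_mono C m})"
  shows "v \<in> Arr C \<and> (\<forall>x\<in>W. dom C x = cod C v \<longrightarrow> Qp C W (comp C x v))"
  using v
proof (induction rule: comp_closure.induct)
  case (base s)
  then show ?case
  proof
    assume s: "s \<in> W"
    have sA: "s \<in> Arr C" using s WA by auto
    show ?thesis
    proof (intro conjI ballI impI sA)
      fix x assume x: "x \<in> W" "dom C x = cod C s"
      have xs: "comp C x s \<in> W" using L0 x s unfolding L0_def by auto
      have xA: "x \<in> Arr C" using x WA by auto
      show "Qp C W (comp C x s)" unfolding Qp_def
      proof (intro ballI impI)
        fix f1 f2 assume f: "f1 \<in> Arr C" "f2 \<in> Arr C" and h: "dom C f1 = dom C f2 \<and> cod C f1 = dom C (comp C x s) \<and> cod C f2 = dom C (comp C x s) \<and> comp C (comp C x s) f1 = comp C (comp C x s) f2"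
        then show "\<exists>u\<in>W. dom C u = cod C f1 \<and> comp C u f1 = comp C u f2"
          using xs by auto
      qed
    qed
  next
    assume "s \<in> {m. split_mono C m}"
    then obtain e where sA: "s \<in> Arr C" and e: "e \<in> Arr C" "dom C e = cod C s" "cod C e = dom C s"
      "comp C e s = idm C (dom C s)"
      unfolding split_mono_def by auto
    show ?thesis
    proof (intro conjI ballI impI sA)
      fix x assume x: "x \<in> W" "dom C x = cod C s"
      have xA: "x \<in> Arr C" using x WA by auto
      obtain w' f' where w': "w' \<in> W" "f' \<in> Arr C" "dom C w' = cod C e" "dom C f' = cod C x"
        "cod C f' = cod C w'" "comp C w' e = comp C f' x"
        using L1 x e unfolding L1_def by (metis)
      have w'A: "w' \<in> Arr C" using w' WA by auto
      have xsA: "comp C x s \<in> Arr C" "dom C (comp C x s) = dom C s" "cod C (comp C x s) = cod C x"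
        using cat_comp[OF C sA xA] x by auto
      have eq: "w' = comp C f' (comp C x s)"
      proof -
        have "w' = comp C w' (idm C (dom C w'))" using cat_unit[OF C w'A] by simp
        also have "\<dots> = comp C w' (comp C e s)" using e w' by simp
        also have "\<dots> = comp C (comp C w' e) s" using cat_assoc[OF C sA e(1) w'A] e w' by simp
        also have "\<dots> = comp C (comp C f' x) s" using w' by simp
        also have "\<dots> = comp C f' (comp C x s)" using cat_assoc[OF C sA xA w'(2)] x w' by simp
        finally show ?thesis .
      qed
      show "Qp C W (comp C x s)" unfolding Qp_def
      proof (intro ballI impI)
        fix f1 f2 assume f: "f1 \<in> Arr C" "f2 \<in> Arr C" and h: "dom C f1 = dom C f2 \<and> cod C f1 = dom C (comp C x s) \<and> cod C f2 = dom C (comp C x s) \<and> comp C (comp C x s) f1 = comp C (comp C x s) f2"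
        have "comp C w' f1 = comp C (comp C f' (comp C x s)) f1" using eq by simp
        also have "\<dots> = comp C f' (comp C (comp C x s) f1)"
          using cat_assoc[OF C f(1) xsA(1) w'(2)] h xsA w' by simp
        also have "\<dots> = comp C f' (comp C (comp C x s) f2)" using h by simp
        also have "\<dots> = comp C (comp C f' (comp C x s)) f2"
          using cat_assoc[OF C f(2) xsA(1) w'(2)] h xsA w' by simp
        also have "\<dots> = comp C w' f2" using eq by simp
        finally show "\<exists>u\<in>W. dom C u = cod C f1 \<and> comp C u f1 = comp C u f2"
          using w' h e xsA by auto
      qed
    qed
  qed
next
  case (compose f g)
  have fA: "f \<in> Arr C" and gA: "g \<in> Arr C" using compose by auto
  have gf: "comp C g f \<in> Arr C" "dom C (comp C g f) = dom C f" "cod C (comp C g f) = cod C g"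
    using cat_comp[OF C fA gA] compose by auto
  show ?case
  proof (intro conjI ballI impI gf(1))
    fix x assume x: "x \<in> W" "dom C x = cod C (comp C g f)"
    have xA: "x \<in> Arr C" using x WA by auto
    have xg: "comp C x g \<in> Arr C" "dom C (comp C x g) = dom C g" "cod C (comp C x g) = cod C x"
      using cat_comp[OF C gA xA] x gf by auto
    have Qg: "Qp C W (comp C x g)" using compose x gf by auto
    show "Qp C W (comp C x (comp C g f))" unfolding Qp_def
    proof (intro ballI impI)
      fix f1 f2 assume f: "f1 \<in> Arr C" "f2 \<in> Arr C" and h: "dom C f1 = dom C f2 \<and> cod C f1 = dom C (comp C x (comp C g f)) \<and> cod C f2 = dom C (comp C x (comp C g f)) \<and> comp C (comp C x (comp C g f)) f1 = comp C (comp C x (comp C g f)) f2"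
      have ass: "comp C x (comp C g f) = comp C (comp C x g) f"
        using cat_assoc[OF C fA gA xA] compose x gf by simp
      have d: "dom C (comp C x (comp C g f)) = dom C f" using cat_comp[OF C gf(1) xA] x gf by simp
      have ff1: "comp C f f1 \<in> Arr C" "dom C (comp C f f1) = dom C f1" "cod C (comp C f f1) = cod C f"
        using cat_comp[OF C f(1) fA] h d by auto
      have ff2: "comp C f f2 \<in> Arr C" "dom C (comp C f f2) = dom C f2" "cod C (comp C f f2) = cod C f"
        using cat_comp[OF C f(2) fA] h d by auto
      have e1: "comp C (comp C x g) (comp C f f1) = comp C (comp C x (comp C g f)) f1"
        using cat_assoc[OF C f(1) fA xg(1)] h d xg compose ass by simp
      have e2: "comp C (comp C x g) (comp C f f2) = comp C (comp C x (comp C g f)) f2"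
        using cat_assoc[OF C f(2) fA xg(1)] h d xg compose ass by simp
      obtain u where u: "u \<in> W" "dom C u = cod C (comp C f f1)"
        "comp C u (comp C f f1) = comp C u (comp C f f2)"
        using Qg ff1 ff2 e1 e2 h xg compose unfolding Qp_def by (metis (no_types, lifting))
      have uA: "u \<in> Arr C" using u WA by auto
      have Qf: "Qp C W (comp C u f)" using compose u ff1 by auto
      have uf: "comp C u f \<in> Arr C" "dom C (comp C u f) = dom C f"
        using cat_comp[OF C fA uA] u ff1 by auto
      have "comp C (comp C u f) f1 = comp C (comp C u f) f2"
        using u cat_assoc[OF C f(1) fA uA] cat_assoc[OF C f(2) fA uA] h d ff1 by simp
      then show "\<exists>u\<in>W. dom C u = cod C f1 \<and> comp C u f1 = comp C u f2"
        using Qf f h d uf unfolding Qp_def by auto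
    qed
  qed
qed

theorem mainTheorem2:
  fixes C :: "('o, 'm) category" and W :: "'m set"
  assumes "is_category C"
    and "W \<subseteq> Arr C"
    and "L0 C W"
    and "L1 C W"
  shows "L2_wrt C W W \<longleftrightarrow> L2_wrt C W (W_L C W)"
proof
  assume "L2_wrt C W W"
  moreover have "W \<subseteq> W_L C W" unfolding W_L_def by (auto intro: comp_closure.base)
  ultimately show "L2_wrt C W (W_L C W)" unfolding L2_wrt_def by blast
next
  assume H: "L2_wrt C W (W_L C W)"
  show "L2_wrt C W W" unfolding L2_wrt_def
  proof (intro ballI impI)
    fix w f1 f2 assume w: "w \<in> W" and f: "f1 \<in> Arr C" "f2 \<in> Arr C"
      and h: "dom C f1 = cod C w \<and> dom C f2 = cod C w \<and> cod C f1 = cod C f2 \<and> comp C f1 w = comp C f2 w"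
    obtain v where v: "v \<in> W_L C W" "dom C v = cod C f1" "comp C v f1 = comp C v f2"
      using H w f h unfolding L2_wrt_def by blast
    have K: "v \<in> Arr C \<and> (\<forall>x\<in>W. dom C x = cod C v \<longrightarrow> Qp C W (comp C x v))"
      using key[OF assms] v(1) unfolding W_L_def by blast
    have vA: "v \<in> Arr C" using K by simp
    have co: "cod C v \<in> Obj C" using cat_dc[OF assms(1) vA] by simp
    have iW: "idm C (cod C v) \<in> W" using assms(3) co unfolding L0_def by auto
    have ii: "dom C (idm C (cod C v)) = cod C v" using cat_id[OF assms(1) co] by simp
    have Q: "Qp C W (comp C (idm C (cod C v)) v)" using K iW ii by blast
    have "comp C (idm C (cod C v)) v = v" using cat_unit[OF assms(1) vA] by simp
    with Q have "Qp C W v" by simp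
    then show "\<exists>w'\<in>W. dom C w' = cod C f1 \<and> comp C w' f1 = comp C w' f2"
      using f h v unfolding Qp_def by auto
  qed
qed

end
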